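(* Let $N\ge 0$ be an integer, let $T^{(1)}=\{t^{(1)}_{n',n}\}_{0\le n',n\le N}$ and $T^{(2)}=\{t^{(2)}_{n',n}\}_{0\le n',n\le N}$ be real $(N+1)\times(N+1)$ matrices, and let $\{f'_{n_1,n_2}\}$ be real numbers indexed by the sparse index set $\{(n_1,n_2)\in\mathbb{N}_0^2: n_1+n_2\le N\}$. Define, for $n_1+n_2\le N$, $$f_{n_1,n_2}=\sum_{\substack{n_1',n_2'\ge 0\\ n_1'+n_2'\le N}} f'_{n_1',n_2'}\, t^{(1)}_{n_1',n_1}\, t^{(2)}_{n_2',n_2}.$$ 1. Define the "first $x_1$, then $x_2$" computation: for $n_1+n_2'\le N$, $g_{n_1,n_2'}=\sum_{0\le n_1'\le N-n_2'} f'_{n_1',n_2'}\,t^{(1)}_{n_1',n_1}$, and for $n_1+n_2\le N$, $\tilde f_{n_1,n_2}=\sum_{0\le n_2'\le N-n_1} g_{n_1,n_2'}\,t^{(2)}_{n_2',n_2}$. Suppose at least one of the following holds: (a) $T^{(1)}$ is lower triangular, i.e. $t^{(1)}_{n_1',n_1}=0$ whenever $n_1'<n_1$; (b) $T^{(2)}$ is upper triangular, i.e. $t^{(2)}_{n_2',n_2}=0$ whenever $n_2'>n_2$. Then $\tilde f_{n_1,n_2}=f_{n_1,n_2}$ for all $(n_1,n_2)$ with $n_1+n_2\le N$. 2. Define the "first $x_2$, then $x_1$" computation: for $n_1'+n_2\le N$, $h_{n_1',n_2}=\sum_{0\le n_2'\le N-n_1'} f'_{n_1',n_2'}\,t^{(2)}_{n_2',n_2}$,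 and for $n_1+n_2\le N$, $\hat f_{n_1,n_2}=\sum_{0\le n_1'\le N-n_2} h_{n_1',n_2}\,t^{(1)}_{n_1',n_1}$. Suppose at least one of the following holds: (a) $T^{(1)}$ is upper triangular, i.e. $t^{(1)}_{n_1',n_1}=0$ whenever $n_1'>n_1$; (b) $T^{(2)}$ is lower triangular, i.e. $t^{(2)}_{n_2',n_2}=0$ whenever $n_2'<n_2$. Then $\hat f_{n_1,n_2}=f_{n_1,n_2}$ for all $(n_1,n_2)$ with $n_1+n_2\le N$.
   Context: $\mathbb{N}_0$ denotes the nonnegative integers. All quantities $f'$, $g$, $h$, $f$, $\tilde f$, $\hat f$ are only defined on index pairs whose sum is at most $N$ (a sparse, triangular index set), which is why the ranges of summation in the dimension-by-dimension computations are truncated as written. *)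

theory Defs
  imports Complex_Main
begin

text \<open>The coefficients f' are given as a function nat => nat => real,
  only values on the sparse set n1 + n2 <= N are used.\<close>

definition sparse_idx :: "nat \<Rightarrow> (nat \<times> nat) set" where
  "sparse_idx N = {(a, b). a + b \<le> N}"

definition full_transform ::
  "nat \<Rightarrow> (nat \<Rightarrow> nat \<Rightarrow> real) \<Rightarrow> (nat \<Rightarrow> nat \<Rightarrow> real) \<Rightarrow> (nat \<Rightarrow> nat \<Rightarrow> real) \<Rightarrow> nat \<Rightarrow> nat \<Rightarrow> real"
  where "full_transform N t1 t2 f' n1 n2 =
    (\<Sum>(n1', n2') \<in> sparse_idx N. f' n1' n2' * t1 n1' n1 * t2 n2' n2)"

definition g_step :: "nat \<Rightarrow> (nat \<Rightarrow> nat \<Rightarrow> real) \<Rightarrow> (nat \<Rightarrow> nat \<Rightarrow> real) \<Rightarrow> nat \<Rightarrow> nat \<Rightarrow> real"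
  where "g_step N t1 f' n1 n2' = (\<Sum>n1' = 0..N - n2'. f' n1' n2' * t1 n1' n1)"

definition ftilde :: "nat \<Rightarrow> (nat \<Rightarrow> nat \<Rightarrow> real) \<Rightarrow> (nat \<Rightarrow> nat \<Rightarrow> real) \<Rightarrow> (nat \<Rightarrow> nat \<Rightarrow> real) \<Rightarrow> nat \<Rightarrow> nat \<Rightarrow> real"
  where "ftilde N t1 t2 f' n1 n2 = (\<Sum>n2' = 0..N - n1. g_step N t1 f' n1 n2' * t2 n2' n2)"

definition h_step :: "nat \<Rightarrow> (nat \<Rightarrow> nat \<Rightarrow> real) \<Rightarrow> (nat \<Rightarrow> nat \<Rightarrow> real) \<Rightarrow> nat \<Rightarrow> nat \<Rightarrow> real"
  where "h_step N t2 f' n1' n2 = (\<Sum>n2' = 0..N - n1'. f' n1' n2' * t2 n2' n2)"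

definition fhat :: "nat \<Rightarrow> (nat \<Rightarrow> nat \<Rightarrow> real) \<Rightarrow> (nat \<Rightarrow> nat \<Rightarrow> real) \<Rightarrow> (nat \<Rightarrow> nat \<Rightarrow> real) \<Rightarrow> nat \<Rightarrow> nat \<Rightarrow> real"
  where "fhat N t1 t2 f' n1 n2 = (\<Sum>n1' = 0..N - n2. h_step N t2 f' n1' n2 * t1 n1' n1)"

end

theory Submission
  imports Defs
begin

lemma sparse_fin: "finite (sparse_idx N)"
proof -
  have "sparse_idx N \<subseteq> {0..N} \<times> {0..N}" by (auto simp: sparse_idx_def)
  thus ?thesis by (rule finite_subset) auto
qed

lemma part1:
  assumes H: "(\<forall>n1' \<le> N. \<forall>n1 \<le> N. n1' < n1 \<longrightarrow> t1 n1' n1 = 0) \<or>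
          (\<forall>n2' \<le> N. \<forall>n2 \<le> N. n2 < n2' \<longrightarrow> t2 n2' n2 = 0)"
    and le: "n1 + n2 \<le> N"
  shows "ftilde N t1 t2 f' n1 n2 = full_transform N t1 t2 f' n1 n2"
proof -
  let ?F = "\<lambda>(a,b). f' a b * t1 a n1 * t2 b n2"
  have "ftilde N t1 t2 f' n1 n2 = (\<Sum>b\<in>{0..N-n1}. \<Sum>a\<in>{0..N-b}. ?F (a,b))"
    unfolding ftilde_def g_step_def by (simp add: sum_distrib_right)
  also have "\<dots> = (\<Sum>p\<in>(SIGMA b:{0..N-n1}. {0..N-b}). ?F (prod.swap p))"
    by (subst sum.Sigma) auto
  also have "\<dots> = (\<Sum>p\<in>prod.swap ` (SIGMA b:{0..N-n1}. {0..N-b}). ?F p)"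
    by (subst sum.reindex) (auto simp: inj_on_def)
  also have "\<dots> = (\<Sum>p\<in>sparse_idx N. ?F p)"
  proof (rule sum.mono_neutral_left[OF sparse_fin])
    show "prod.swap ` (SIGMA b:{0..N-n1}. {0..N-b}) \<subseteq> sparse_idx N"
      by (auto simp: sparse_idx_def)
    show "\<forall>p\<in>sparse_idx N - prod.swap ` (SIGMA b:{0..N-n1}. {0..N-b}). ?F p = 0"
    proof
      fix p assume p: "p \<in> sparse_idx N - prod.swap ` (SIGMA b:{0..N-n1}. {0..N-b})"
      obtain a b where ab: "p = (a,b)" by force
      have "a + b \<le> N" "\<not> b \<le> N - n1" using p ab
        by (auto simp: sparse_idx_def image_iff)
      then show "?F p = 0" using H le ab by auto
    qed
  qed
  finally show ?thesis unfolding full_transform_def .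
qed

lemma part2:
  assumes H: "(\<forall>n1' \<le> N. \<forall>n1 \<le> N. n1 < n1' \<longrightarrow> t1 n1' n1 = 0) \<or>
          (\<forall>n2' \<le> N. \<forall>n2 \<le> N. n2' < n2 \<longrightarrow> t2 n2' n2 = 0)"
    and le: "n1 + n2 \<le> N"
  shows "fhat N t1 t2 f' n1 n2 = full_transform N t1 t2 f' n1 n2"
proof -
  let ?F = "\<lambda>(a,b). f' a b * t1 a n1 * t2 b n2"
  have "fhat N t1 t2 f' n1 n2 = (\<Sum>a\<in>{0..N-n2}. \<Sum>b\<in>{0..N-a}. ?F (a,b))"
    unfolding fhat_def h_step_def by (simp add: sum_distrib_right sum_distrib_left mult_ac)
  also have "\<dots> = (\<Sum>p\<in>(SIGMA a:{0..N-n2}. {0..N-a}). ?F p)"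
    by (subst sum.Sigma) auto
  also have "\<dots> = (\<Sum>p\<in>sparse_idx N. ?F p)"
  proof (rule sum.mono_neutral_left[OF sparse_fin])
    show "(SIGMA a:{0..N-n2}. {0..N-a}) \<subseteq> sparse_idx N"
      by (auto simp: sparse_idx_def)
    show "\<forall>p\<in>sparse_idx N - (SIGMA a:{0..N-n2}. {0..N-a}). ?F p = 0"
    proof
      fix p assume p: "p \<in> sparse_idx N - (SIGMA a:{0..N-n2}. {0..N-a})"
      obtain a b where ab: "p = (a,b)" by force
      have "a + b \<le> N" "\<not> a \<le> N - n2" using p ab
        by (auto simp: sparse_idx_def)
      then show "?F p = 0" using H le ab by auto
    qed
  qed
  finally show ?thesis unfolding full_transform_def .
qed

theorem proposition3p1:
  fixes N :: nat
    and t1 t2 :: "nat \<Rightarrow> nat \<Rightarrow> real"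
    and f' :: "nat \<Rightarrow> nat \<Rightarrow> real"
  shows "((\<forall>n1' \<le> N. \<forall>n1 \<le> N. n1' < n1 \<longrightarrow> t1 n1' n1 = 0) \<or>
          (\<forall>n2' \<le> N. \<forall>n2 \<le> N. n2 < n2' \<longrightarrow> t2 n2' n2 = 0)
          \<longrightarrow> (\<forall>n1 n2. n1 + n2 \<le> N \<longrightarrow>
                 ftilde N t1 t2 f' n1 n2 = full_transform N t1 t2 f' n1 n2))
       \<and> ((\<forall>n1' \<le> N. \<forall>n1 \<le> N. n1 < n1' \<longrightarrow> t1 n1' n1 = 0) \<or>
          (\<forall>n2' \<le> N. \<forall>n2 \<le> N. n2' < n2 \<longrightarrow> t2 n2' n2 = 0)
          \<longrightarrow> (\<forall>n1 n2. n1 + n2 \<le> N \<longrightarrow>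
                 fhat N t1 t2 f' n1 n2 = full_transform N t1 t2 f' n1 n2))"
  using part1[of N t1 t2] part2[of N t1 t2] by blast

end
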